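(* Let $(x_n)_{n\ge0}$ be an infinite path in $\Gamma$ with $\ell(x_n)=n$. For each nonreal $z$ let $v_z$ be the nonzero solution of $Jv_z=zv_z$ on $\Gamma$ normalized by $v_z(x_0)=1$. Then for each $n\ge0$ there exist polynomials $b_n$ and $a_{n,x}$ ($x\in\Gamma_{x_n}$) with real coefficients such that $v_z(x)=a_{n,x}(z)/b_n(z)$ for all $x\in\Gamma_{x_n}$ and all nonreal $z$; moreover $b_n$ divides $b_{n+1}$ for every $n$.
   Context: Let $\Gamma$ be an infinite connected tree whose vertices are arranged in levels $\ell(x)\in\{0,1,2,\dots\}$: every vertex $x$ is adjacent to exactly one vertex $x'$ with $\ell(x')=\ell(x)+1$; for $\ell(x)\ge 1$ the set $N_x=\{y:\ y'=x\}$ of neighbours of $x$ on level $\ell(x)-1$ is finite and nonempty; $N_x=\emptyset$ if $\ell(x)=0$; there are no other edges. For $x\in\Gamma$, $\Gamma_x$ is the finite subtree consisting of $x$ and all its descendants. Fix $\lambda_x>0$, $\beta_x\in\mathbb R$. The Jacobi matrix $J$ acts on functions $v:\Gamma\to\mathbb C$ by $(Jv)(x)=\lambda_x v(x')+\beta_x v(x)+\sum_{y\in N_x}\lambda_y v(y)$. For nonreal $z$ a nonzero solution of $Jv=zv$ on $\Gamma$ exists, is unique up to a constant multiple, and vanishes nowhere. *)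

theory Defs
  imports "HOL-Computational_Algebra.Polynomial" Complex_Main
begin

text \<open>A levelled tree on the vertex type 'v: lev x is the level, par x = x' is the unique
  neighbour one level up. N_x = {y. par y = x}.\<close>

definition children :: "('v \<Rightarrow> 'v) \<Rightarrow> 'v \<Rightarrow> 'v set" where
  "children par x = {y. par y = x}"

definition level_tree :: "('v \<Rightarrow> nat) \<Rightarrow> ('v \<Rightarrow> 'v) \<Rightarrow> bool" where
  "level_tree lev par \<longleftrightarrow>
     (\<forall>x. lev (par x) = lev x + 1) \<and>
     (\<forall>x. lev x \<ge> 1 \<longrightarrow> finite (children par x) \<and> children par x \<noteq> {}) \<and>
     (\<forall>x. lev x = 0 \<longrightarrow> children par x = {}) \<and>
     (\<forall>x y. \<exists>m n. (par ^^ m) x = (par ^^ n) y)"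

definition subtree :: "('v \<Rightarrow> 'v) \<Rightarrow> 'v \<Rightarrow> 'v set" where
  "subtree par x = {y. \<exists>k. (par ^^ k) y = x}"

definition jacobi :: "('v \<Rightarrow> 'v) \<Rightarrow> ('v \<Rightarrow> real) \<Rightarrow> ('v \<Rightarrow> real) \<Rightarrow> ('v \<Rightarrow> complex) \<Rightarrow> 'v \<Rightarrow> complex" where
  "jacobi par lam bet v x =
     of_real (lam x) * v (par x) + of_real (bet x) * v x
     + (\<Sum>y\<in>children par x. of_real (lam y) * v y)"

end

theory Submission
  imports Defs
begin


definition ev :: "real poly \<Rightarrow> complex \<Rightarrow> complex" where
  "ev p z = poly (map_poly of_real p) z"

lemma mp_add: "map_poly (of_real :: real \<Rightarrow> complex) (p + q) = map_poly of_real p + map_poly of_real q"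
  by (rule poly_eqI) (simp add: coeff_map_poly)
lemma mp_mult: "map_poly (of_real :: real \<Rightarrow> complex) (p * q) = map_poly of_real p * map_poly of_real q"
  by (rule poly_eqI) (simp add: coeff_map_poly coeff_mult)
lemma ev_add[simp]: "ev (p + q) z = ev p z + ev q z" by (simp add: ev_def mp_add)
lemma ev_mult[simp]: "ev (p * q) z = ev p z * ev q z" by (simp add: ev_def mp_mult)
lemma ev_const[simp]: "ev [:c:] z = of_real c" by (simp add: ev_def map_poly_pCons)
lemma ev_one[simp]: "ev 1 z = 1" by (simp add: ev_def)
lemma ev_zero[simp]: "ev 0 z = 0" by (simp add: ev_def)
lemma ev_X: "ev [:0,1:] z = z" by (simp add: ev_def map_poly_pCons)
lemma ev_prod: "ev (\<Prod>x\<in>A. f x) z = (\<Prod>x\<in>A. ev (f x) z)"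
  by (induction A rule: infinite_finite_induct) auto

definition ratf :: "(complex \<Rightarrow> complex) \<Rightarrow> bool" where
  "ratf f \<longleftrightarrow> (\<exists>p q. \<forall>z. Im z \<noteq> 0 \<longrightarrow> ev q z \<noteq> 0 \<and> f z = ev p z / ev q z)"

lemma ratf_cong: "(\<And>z. Im z \<noteq> 0 \<Longrightarrow> f z = g z) \<Longrightarrow> ratf g \<Longrightarrow> ratf f"
  unfolding ratf_def by metis

lemma ratf_const: "ratf (\<lambda>z. of_real c)"
  unfolding ratf_def by (rule exI[of _ "[:c:]"], rule exI[of _ 1]) simp

lemma ratf_id: "ratf (\<lambda>z. z)"
  unfolding ratf_def by (rule exI[of _ "[:0,1:]"], rule exI[of _ 1]) (simp add: ev_X)

lemma ratf_add: assumes "ratf f" "ratf g" shows "ratf (\<lambda>z. f z + g z)"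
proof -
  obtain p1 q1 where 1: "\<forall>z. Im z \<noteq> 0 \<longrightarrow> ev q1 z \<noteq> 0 \<and> f z = ev p1 z / ev q1 z"
    using assms(1) unfolding ratf_def by blast
  obtain p2 q2 where 2: "\<forall>z. Im z \<noteq> 0 \<longrightarrow> ev q2 z \<noteq> 0 \<and> g z = ev p2 z / ev q2 z"
    using assms(2) unfolding ratf_def by blast
  show ?thesis unfolding ratf_def
    apply (rule exI[of _ "p1 * q2 + p2 * q1"], rule exI[of _ "q1 * q2"])
    using 1 2 by (auto simp: field_simps)
qed

lemma ratf_mult: assumes "ratf f" "ratf g" shows "ratf (\<lambda>z. f z * g z)"
proof -
  obtain p1 q1 where 1: "\<forall>z. Im z \<noteq> 0 \<longrightarrow> ev q1 z \<noteq> 0 \<and> f z = ev p1 z / ev q1 z"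
    using assms(1) unfolding ratf_def by blast
  obtain p2 q2 where 2: "\<forall>z. Im z \<noteq> 0 \<longrightarrow> ev q2 z \<noteq> 0 \<and> g z = ev p2 z / ev q2 z"
    using assms(2) unfolding ratf_def by blast
  show ?thesis unfolding ratf_def
    apply (rule exI[of _ "p1 * p2"], rule exI[of _ "q1 * q2"])
    using 1 2 by (auto simp: field_simps)
qed

lemma ratf_div: assumes "ratf f" "ratf g" "\<And>z. Im z \<noteq> 0 \<Longrightarrow> g z \<noteq> 0"
  shows "ratf (\<lambda>z. f z / g z)"
proof -
  obtain p1 q1 where 1: "\<forall>z. Im z \<noteq> 0 \<longrightarrow> ev q1 z \<noteq> 0 \<and> f z = ev p1 z / ev q1 z"
    using assms(1) unfolding ratf_def by blast
  obtain p2 q2 where 2: "\<forall>z. Im z \<noteq> 0 \<longrightarrow> ev q2 z \<noteq> 0 \<and> g z = ev p2 z / ev q2 z"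
    using assms(2) unfolding ratf_def by blast
  have 3: "Im z \<noteq> 0 \<Longrightarrow> ev p2 z \<noteq> 0" for z using 2 assms(3)[of z] by auto
  show ?thesis unfolding ratf_def
    apply (rule exI[of _ "p1 * q2"], rule exI[of _ "q1 * p2"])
    using 1 2 3 by (auto simp: field_simps)
qed

lemma ratf_diff: assumes "ratf f" "ratf g" shows "ratf (\<lambda>z. f z - g z)"
proof -
  have "ratf (\<lambda>z. f z + of_real (-1) * g z)"
    by (intro ratf_add ratf_mult assms ratf_const)
  then show ?thesis by (rule ratf_cong[rotated]) simp
qed

lemma ratf_sum: "finite A \<Longrightarrow> (\<And>c. c \<in> A \<Longrightarrow> ratf (f c)) \<Longrightarrow> ratf (\<lambda>z. \<Sum>c\<in>A. f c z)"
proof (induction A rule: finite_induct)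
  case empty
  have "ratf (\<lambda>z. of_real 0)" by (rule ratf_const)
  then show ?case by simp
next
  case (insert x F)
  have "ratf (\<lambda>z. f x z + (\<Sum>c\<in>F. f c z))" using insert by (intro ratf_add) auto
  then show ?case using insert by simp
qed

theorem corollary3:
  fixes lev :: "'v \<Rightarrow> nat" and par :: "'v \<Rightarrow> 'v"
    and lam bet :: "'v \<Rightarrow> real"
    and xs :: "nat \<Rightarrow> 'v"
    and v :: "complex \<Rightarrow> 'v \<Rightarrow> complex"
  assumes tree: "level_tree lev par"
    and lam_pos: "\<And>x. lam x > 0"
    and path_level: "\<And>n. lev (xs n) = n"
    and path_adj: "\<And>n. par (xs n) = xs (Suc n)"
    and sol: "\<And>z. Im z \<noteq> 0 \<Longrightarrow> jacobi par lam bet (v z) = (\<lambda>x. z * v z x)"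
    and norm: "\<And>z. Im z \<noteq> 0 \<Longrightarrow> v z (xs 0) = 1"
  shows "\<exists>(b :: nat \<Rightarrow> real poly) (a :: nat \<Rightarrow> 'v \<Rightarrow> real poly).
           (\<forall>n. b n \<noteq> 0) \<and>
           (\<forall>n. \<forall>x\<in>subtree par (xs n). \<forall>z. Im z \<noteq> 0 \<longrightarrow>
               v z x = poly (map_poly of_real (a n x)) z / poly (map_poly of_real (b n)) z) \<and>
           (\<forall>n. b n dvd b (Suc n))"
proof -
  have levpar: "lev (par x) = lev x + 1" for x using tree unfolding level_tree_def by blast
  have finch: "finite (children par x)" for x
  proof (cases "lev x = 0")
    case True then show ?thesis using tree unfolding level_tree_def by auto
  next
    case False then show ?thesis using tree unfolding level_tree_def by auto
  qed
  have chpar: "c \<in> children par y \<Longrightarrow> par c = y" for c y by (simp add: children_def)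
  have chlev: "c \<in> children par y \<Longrightarrow> lev c < lev y" for c y using chpar levpar by force
  have subfin: "finite (subtree par x)" for x
  proof (induction "lev x" arbitrary: x rule: less_induct)
    case less
    have "subtree par x \<subseteq> insert x (\<Union>c\<in>children par x. subtree par c)"
    proof
      fix y assume "y \<in> subtree par x"
      then obtain k where k: "(par ^^ k) y = x" by (auto simp: subtree_def)
      show "y \<in> insert x (\<Union>c\<in>children par x. subtree par c)"
      proof (cases k)
        case 0 then show ?thesis using k by simp
      next
        case (Suc j)
        have "par ((par ^^ j) y) = x" using k Suc by simp
        then have "(par ^^ j) y \<in> children par x" by (simp add: children_def)
        moreover have "y \<in> subtree par ((par ^^ j) y)" by (auto simp: subtree_def)
        ultimately show ?thesis by blast
      qed
    qed
    moreover have "finite (insert x (\<Union>c\<in>children par x. subtree par c))"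
      using less chlev finch by auto
    ultimately show ?case by (rule finite_subset)
  qed
  have key: "\<exists>R. ratf R \<and> (\<forall>z. Im z \<noteq> 0 \<longrightarrow> Im z * Im (R z) < 0) \<and>
                (\<forall>z. Im z \<noteq> 0 \<longrightarrow> v z y = R z * v z (par y))" for y
  proof (induction "lev y" arbitrary: y rule: less_induct)
    case less
    define C where "C = children par y"
    have fC: "finite C" unfolding C_def by (rule finch)
    have "\<forall>c\<in>C. \<exists>R. ratf R \<and> (\<forall>z. Im z \<noteq> 0 \<longrightarrow> Im z * Im (R z) < 0) \<and>
                (\<forall>z. Im z \<noteq> 0 \<longrightarrow> v z c = R z * v z (par c))"
      using less chlev unfolding C_def by blast
    then obtain Rf where Rf: "\<And>c. c \<in> C \<Longrightarrow> ratf (Rf c) \<and> (\<forall>z. Im z \<noteq> 0 \<longrightarrow> Im z * Im (Rf c z) < 0) \<and>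
                (\<forall>z. Im z \<noteq> 0 \<longrightarrow> v z c = Rf c z * v z (par c))"
      by metis
    define S where "S z = (\<Sum>c\<in>C. of_real (lam c) * Rf c z)" for z
    define D where "D z = z - of_real (bet y) - S z" for z
    define R where "R z = of_real (lam y) / D z" for z
    have ImD: "Im z * Im (D z) > 0" if z: "Im z \<noteq> 0" for z
    proof -
      have "Im (S z) = (\<Sum>c\<in>C. lam c * Im (Rf c z))" unfolding S_def by (simp add: Im_sum)
      then have "Im z * Im (D z) = (Im z)^2 - (\<Sum>c\<in>C. lam c * (Im z * Im (Rf c z)))"
        unfolding D_def by (simp add: sum_distrib_left power2_eq_square algebra_simps)
      moreover have "(\<Sum>c\<in>C. lam c * (Im z * Im (Rf c z))) \<le> 0"
      proof (rule sum_nonpos)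
        fix c assume "c \<in> C"
        then have "Im z * Im (Rf c z) < 0" using Rf z by blast
        then show "lam c * (Im z * Im (Rf c z)) \<le> 0"
          using lam_pos[of c] by (simp add: mult_nonneg_nonpos)
      qed
      moreover have "(Im z)^2 > 0" using z by simp
      ultimately show ?thesis by linarith
    qed
    have Dnz: "Im z \<noteq> 0 \<Longrightarrow> D z \<noteq> 0" for z using ImD[of z] by force
    have ImR: "Im z * Im (R z) < 0" if z: "Im z \<noteq> 0" for z
    proof -
      have "Im (R z) = - lam y * Im (D z) / (cmod (D z))^2"
        unfolding R_def by (simp add: Im_divide cmod_power2)
      then have "Im z * Im (R z) = - lam y * (Im z * Im (D z)) / (cmod (D z))^2" by simp
      moreover have "(cmod (D z))^2 > 0" using Dnz[OF z] by simp
      ultimately show ?thesis using ImD[OF z] lam_pos[of y]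
        by (simp add: divide_neg_pos mult_pos_pos)
    qed
    have eq: "v z y = R z * v z (par y)" if z: "Im z \<noteq> 0" for z
    proof -
      have J: "jacobi par lam bet (v z) y = z * v z y" using sol[OF z] by metis
      have "(\<Sum>c\<in>C. of_real (lam c) * v z c) = (\<Sum>c\<in>C. of_real (lam c) * Rf c z * v z y)"
        using Rf z chpar unfolding C_def by (intro sum.cong) auto
      also have "\<dots> = S z * v z y" unfolding S_def by (simp add: sum_distrib_right)
      finally have "of_real (lam y) * v z (par y) + of_real (bet y) * v z y + S z * v z y = z * v z y"
        using J unfolding jacobi_def C_def by simp
      then have "of_real (lam y) * v z (par y) = D z * v z y"
        unfolding D_def by (simp add: algebra_simps)
      then show ?thesis unfolding R_def using Dnz[OF z] by (simp add: field_simps)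
    qed
    have "ratf D" unfolding D_def S_def
      by (intro ratf_diff ratf_id ratf_const ratf_sum fC ratf_mult) (use Rf in blast)
    then have "ratf R" unfolding R_def using Dnz by (intro ratf_div ratf_const) auto
    then show ?case using ImR eq by blast
  qed
  have pathr: "ratf (\<lambda>z. v z (xs k))" for k
  proof (induction k)
    case 0
    show ?case by (rule ratf_cong[OF _ ratf_const[of 1]]) (simp add: norm)
  next
    case (Suc k)
    obtain R where R: "ratf R" "\<And>z. Im z \<noteq> 0 \<Longrightarrow> Im z * Im (R z) < 0"
      "\<And>z. Im z \<noteq> 0 \<Longrightarrow> v z (xs k) = R z * v z (par (xs k))" using key by blast
    have Rnz: "Im z \<noteq> 0 \<Longrightarrow> R z \<noteq> 0" for z using R(2)[of z] by force
    have "ratf (\<lambda>z. v z (xs k) / R z)" using Suc R(1) Rnz by (intro ratf_div) auto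
    then show ?case
      by (rule ratf_cong[rotated]) (use R(3) Rnz path_adj in auto)
  qed
  have subr: "\<forall>x. (par ^^ k) x = xs n \<longrightarrow> ratf (\<lambda>z. v z x)" for k n
  proof (induction k)
    case 0 then show ?case using pathr by simp
  next
    case (Suc k)
    show ?case
    proof (intro allI impI)
      fix x assume "(par ^^ Suc k) x = xs n"
      then have "(par ^^ k) (par x) = xs n" by (simp add: funpow_Suc_right del: funpow.simps)
      then have h: "ratf (\<lambda>z. v z (par x))" using Suc by blast
      obtain R where R: "ratf R"
        "\<And>z. Im z \<noteq> 0 \<Longrightarrow> v z x = R z * v z (par x)" using key by blast
      have "ratf (\<lambda>z. R z * v z (par x))" using R(1) h by (rule ratf_mult)
      then show "ratf (\<lambda>z. v z x)" by (rule ratf_cong[rotated]) (use R(2) in auto)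
    qed
  qed
  have allr: "x \<in> subtree par (xs n) \<Longrightarrow> ratf (\<lambda>z. v z x)" for x n
    using subr unfolding subtree_def by blast
  define PQ where "PQ x = (SOME pq. \<forall>z. Im z \<noteq> 0 \<longrightarrow> ev (snd pq) z \<noteq> 0 \<and>
       v z x = ev (fst pq) z / ev (snd pq) z)" for x
  define P where "P x = fst (PQ x)" for x
  define Q where "Q x = snd (PQ x)" for x
  have PQ: "\<forall>z. Im z \<noteq> 0 \<longrightarrow> ev (Q x) z \<noteq> 0 \<and> v z x = ev (P x) z / ev (Q x) z"
    if "ratf (\<lambda>z. v z x)" for x
  proof -
    have "\<exists>pq. \<forall>z. Im z \<noteq> 0 \<longrightarrow> ev (snd pq) z \<noteq> 0 \<and> v z x = ev (fst pq) z / ev (snd pq) z"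
      using that unfolding ratf_def by auto
    then show ?thesis unfolding P_def Q_def PQ_def by (rule someI_ex)
  qed
  define G where "G n = subtree par (xs n)" for n
  define b where "b n = (\<Prod>x\<in>G n. Q x)" for n
  define a where "a n x = P x * (\<Prod>y\<in>G n - {x}. Q y)" for n x
  have fG: "finite (G n)" for n unfolding G_def by (rule subfin)
  have Qnz: "x \<in> G n \<Longrightarrow> Im z \<noteq> 0 \<Longrightarrow> ev (Q x) z \<noteq> 0" for x n z
    using PQ allr unfolding G_def by blast
  have bnz: "b n \<noteq> 0" for n
  proof
    assume "b n = 0"
    then have "ev (b n) \<i> = 0" by simp
    moreover have "ev (b n) \<i> \<noteq> 0" unfolding b_def ev_prod using fG Qnz by simp
    ultimately show False by simp
  qed
  have repr: "v z x = ev (a n x) z / ev (b n) z" if x: "x \<in> G n" and z: "Im z \<noteq> 0" for n x z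
  proof -
    define \<Pi> where "\<Pi> = (\<Prod>y\<in>G n - {x}. ev (Q y) z)"
    have Pinz: "\<Pi> \<noteq> 0" unfolding \<Pi>_def using fG Qnz z by (simp add: prod_zero_iff) blast
    have "ev (b n) z = ev (Q x) z * \<Pi>" unfolding b_def ev_prod \<Pi>_def
      using fG x by (simp add: prod.remove)
    moreover have "ev (a n x) z = ev (P x) z * \<Pi>" unfolding a_def \<Pi>_def by (simp add: ev_prod)
    moreover have "v z x = ev (P x) z / ev (Q x) z" using PQ allr x z unfolding G_def by blast
    ultimately show ?thesis using Pinz by simp
  qed
  have sub: "G n \<subseteq> G (Suc n)" for n
  proof
    fix y assume "y \<in> G n"
    then obtain k where "(par ^^ k) y = xs n" by (auto simp: G_def subtree_def)
    then have "(par ^^ Suc k) y = xs (Suc n)" using path_adj by simp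
    then show "y \<in> G (Suc n)" unfolding G_def subtree_def by blast
  qed
  have dv: "b n dvd b (Suc n)" for n unfolding b_def by (rule prod_dvd_prod_subset[OF fG sub])
  show ?thesis
    apply (rule exI[of _ b], rule exI[of _ a])
    using bnz repr dv unfolding G_def ev_def by blast
qed

end
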